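(* Let $A_1,\dots,A_N$ be formulae built from variables other than $q$ using only $\cdot$, $\backslash$, $/$. Let $$\Phi = !((s/s)/!\,[]^{-1}A_1),\ !\,[]^{-1}A_1,\ \dots,\ !((s/s)/!\,[]^{-1}A_N),\ !\,[]^{-1}A_N .$$ Then $\Phi$ internalises $\{A_1,\dots,A_N\}$ in $\mathcal{F}^{\mathrm{mult}}_{2015}$, that is: (1) the sequent $\Phi,s\to s$ is derivable in $\mathcal{F}^{\mathrm{mult}}_{2015}$; (2) for every $i\in\{1,\dots,N\}$, all sequences of tree terms $\Delta_1,\Delta_2$ and every formula $C$, if $\Phi,\Delta_1,A_i,\Delta_2\to C$ is derivable in $\mathcal{F}^{\mathrm{mult}}_{2015}$ then so is $\Phi,\Delta_1,\Delta_2\to C$; (3) the sequent $!A_1,\dots,!A_N\to \prod\pi_q(\Phi)$ is derivable in $\mathcal{E}^{\mathrm{mult}}$.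
   Context: $s$ and $q$ are two fixed distinct variables. Formulae are built from a countable set of variables and $\mathbf1$ by $\backslash,/,\cdot$ and the unary $\langle\rangle$, $[]^{-1}$, $!$. Stoup-free bracketed calculus $\mathcal{F}^{\mathrm{mult}}_{2015}$: a tree term is a formula or $[\Xi]$ with $\Xi$ a meta-formula; a meta-formula is a finite sequence of tree terms (empty $\Lambda$); sequents $\Xi\to C$; $\Xi(\Theta)$ designates an occurrence of a meta-formula $\Theta$ which is $\Xi$ itself or the full content of some bracket $[\Theta]$ at any depth. Rules: axioms $A\to A$, $\Lambda\to\mathbf1$; ($/L$) from $\Gamma\to B$ and $\Xi(\Delta_1,C,\Delta_2)\to D$ infer $\Xi(\Delta_1,C/B,\Gamma,\Delta_2)\to D$; ($/R$) from $\Gamma,B\to C$ infer $\Gamma\to C/B$; ($\backslash L$) from $\Gamma\to A$ and $\Xi(\Delta_1,C,\Delta_2)\to D$ infer $\Xi(\Delta_1,\Gamma,A\backslash C,\Delta_2)\to D$; ($\backslash R$) from $A,\Gamma\to C$ infer $\Gamma\to A\backslash C$; ($\cdot L$) from $\Xi(\Delta_1,A,B,\Delta_2)\to D$ infer $\Xi(\Delta_1,A\cdot B,\Delta_2)\to D$; ($\cdot R$) from $\Delta\to A$ and $\Gamma\to B$ infer $\Delta,\Gamma\to A\cdot B$; ($\mathbf1L$) from $\Xi(\Delta_1,\Delta_2)\to A$ infer $\Xi(\Delta_1,\mathbf1,\Delta_2)\to A$; ($[]^{-1}L$) from $\Xi(\Delta_1,A,\Delta_2)\to B$ infer $\Xi(\Delta_1,[[]^{-1}A],\Delta_2)\to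 B$; ($[]^{-1}R$) from $[\Xi]\to A$ infer $\Xi\to[]^{-1}A$; ($\langle\rangle L$) from $\Xi(\Delta_1,[A],\Delta_2)\to B$ infer $\Xi(\Delta_1,\langle\rangle A,\Delta_2)\to B$; ($\langle\rangle R$) from $\Xi\to A$ infer $[\Xi]\to\langle\rangle A$; ($!L$) from $\Xi(\Delta_1,A,\Delta_2)\to C$ infer $\Xi(\Delta_1,!A,\Delta_2)\to C$; ($!P_1$) from $\Xi(\Delta_1,!A,\Phi,\Delta_2)\to C$ infer $\Xi(\Delta_1,\Phi,!A,\Delta_2)\to C$; ($!P_2$) the converse; ($!R$) from $!A_1,\dots,!A_n\to B$ infer $!A_1,\dots,!A_n\to!B$ ($n\ge1$); ($!C$) from $\Xi(!A_1,\dots,!A_n,\Gamma_1,[!A_1,\dots,!A_n,\Gamma_2],\Gamma_3)\to C$ infer $\Xi(!A_1,\dots,!A_n,\Gamma_1,\Gamma_2,\Gamma_3)\to C$ ($n\ge1$); (cut) from $\Pi\to A$ and $\Xi(\Gamma_1,A,\Gamma_2)\to C$ infer $\Xi(\Gamma_1,\Pi,\Gamma_2)\to C$. Bracket-free calculus $\mathcal{E}^{\mathrm{mult}}$: formulae without bracket modalities; sequents $\Pi\to A$, $\Pi$ a finite sequence of formulae; axioms $A\to A$, $\Lambda\to\mathbf1$; rules ($\backslash L$) from $\Pi\to A$ and $\Delta_1,B,\Delta_2\to C$ infer $\Delta_1,\Pi,A\backslash B,\Delta_2\to C$; ($\backslash R$) from $A,\Pi\to B$ infer $\Pi\to A\backslash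 B$; ($/L$) from $\Pi\to A$ and $\Delta_1,B,\Delta_2\to C$ infer $\Delta_1,B/A,\Pi,\Delta_2\to C$; ($/R$) from $\Pi,A\to B$ infer $\Pi\to B/A$; ($\cdot L$), ($\cdot R$), ($\mathbf1L$) standard; ($!R$) from $!A_1,\dots,!A_n\to B$ infer $!A_1,\dots,!A_n\to!B$ ($n\geq0$); ($!L$) from $\Delta_1,A,\Delta_2\to C$ infer $\Delta_1,!A,\Delta_2\to C$; ($!P_1$), ($!P_2$) permuting $!A$ with any sequence $\Phi$ in either direction; ($!C$) from $\Delta_1,!A,!A,\Delta_2\to C$ infer $\Delta_1,!A,\Delta_2\to C$; ($!W$) from $\Delta_1,\Delta_2\to C$ infer $\Delta_1,!A,\Delta_2\to C$; (cut). The projection $\pi_q$ maps formulae by $\pi_q(q)=\mathbf1$, $\pi_q(p)=p$ for variables $p\ne q$, $\pi_q(\mathbf1)=\mathbf1$, commuting with $\backslash,/,\cdot,!$, and $\pi_q(\langle\rangle A)=\pi_q([]^{-1}A)=\pi_q(A)$; on meta-formulae it is applied elementwise and erases brackets ($\pi_q([\Xi])=\pi_q(\Xi)$). For a sequence $E_1,\dots,E_k$ of formulae, $\prod(E_1,\dots,E_k)=E_1\cdot\ldots\cdot E_k$. *)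

theory Defs
  imports Main
begin

text \<open>LDiv A C is A\C, RDiv C B is C/B, Prod A B is A.B, Diam is the bracket modality
  (angle brackets), BInv is the inverse bracket modality, Bang is the exponential.\<close>
datatype fm = Var nat | One | LDiv fm fm | RDiv fm fm | Prod fm fm
  | Diam fm | BInv fm | Bang fm

datatype tt = F fm | Br "tt list"

text \<open>Contexts Xi(-): the hole is either the whole meta-formula or the full
  content of some bracket at any depth.\<close>
datatype ctx = Hole | InBr "tt list" ctx "tt list"

fun fill :: "ctx \<Rightarrow> tt list \<Rightarrow> tt list" where
  "fill Hole Th = Th"
| "fill (InBr L c R) Th = L @ [Br (fill c Th)] @ R"

abbreviation bangs :: "fm list \<Rightarrow> tt list" where
  "bangs As \<equiv> map (\<lambda>A. F (Bang A)) As"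

inductive derF :: "tt list \<Rightarrow> fm \<Rightarrow> bool" where
  ax: "derF [F A] A"
| oneR: "derF [] One"
| rdivL: "\<lbrakk>derF G B; derF (fill X (D1 @ [F C] @ D2)) D\<rbrakk>
          \<Longrightarrow> derF (fill X (D1 @ [F (RDiv C B)] @ G @ D2)) D"
| rdivR: "derF (G @ [F B]) C \<Longrightarrow> derF G (RDiv C B)"
| ldivL: "\<lbrakk>derF G A; derF (fill X (D1 @ [F C] @ D2)) D\<rbrakk>
          \<Longrightarrow> derF (fill X (D1 @ G @ [F (LDiv A C)] @ D2)) D"
| ldivR: "derF (F A # G) C \<Longrightarrow> derF G (LDiv A C)"
| prodL: "derF (fill X (D1 @ [F A, F B] @ D2)) D \<Longrightarrow> derF (fill X (D1 @ [F (Prod A B)] @ D2)) D"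
| prodR: "\<lbrakk>derF D A; derF G B\<rbrakk> \<Longrightarrow> derF (D @ G) (Prod A B)"
| oneL: "derF (fill X (D1 @ D2)) A \<Longrightarrow> derF (fill X (D1 @ [F One] @ D2)) A"
| binvL: "derF (fill X (D1 @ [F A] @ D2)) B \<Longrightarrow> derF (fill X (D1 @ [Br [F (BInv A)]] @ D2)) B"
| binvR: "derF [Br X] A \<Longrightarrow> derF X (BInv A)"
| diamL: "derF (fill X (D1 @ [Br [F A]] @ D2)) B \<Longrightarrow> derF (fill X (D1 @ [F (Diam A)] @ D2)) B"
| diamR: "derF X A \<Longrightarrow> derF [Br X] (Diam A)"
| bangL: "derF (fill X (D1 @ [F A] @ D2)) C \<Longrightarrow> derF (fill X (D1 @ [F (Bang A)] @ D2)) C"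
| bangP1: "derF (fill X (D1 @ [F (Bang A)] @ P @ D2)) C \<Longrightarrow> derF (fill X (D1 @ P @ [F (Bang A)] @ D2)) C"
| bangP2: "derF (fill X (D1 @ P @ [F (Bang A)] @ D2)) C \<Longrightarrow> derF (fill X (D1 @ [F (Bang A)] @ P @ D2)) C"
| bangR: "\<lbrakk>As \<noteq> []; derF (bangs As) B\<rbrakk> \<Longrightarrow> derF (bangs As) (Bang B)"
| bangC: "\<lbrakk>As \<noteq> []; derF (fill X (bangs As @ G1 @ [Br (bangs As @ G2)] @ G3)) C\<rbrakk>
          \<Longrightarrow> derF (fill X (bangs As @ G1 @ G2 @ G3)) C"
| cut: "\<lbrakk>derF P A; derF (fill X (G1 @ [F A] @ G2)) C\<rbrakk> \<Longrightarrow> derF (fill X (G1 @ P @ G2)) C"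

datatype efm = EVar nat | EOne | ELDiv efm efm | ERDiv efm efm | EProd efm efm | EBang efm

inductive derE :: "efm list \<Rightarrow> efm \<Rightarrow> bool" where
  eax: "derE [A] A"
| eoneR: "derE [] EOne"
| eldivL: "\<lbrakk>derE P A; derE (D1 @ [B] @ D2) C\<rbrakk> \<Longrightarrow> derE (D1 @ P @ [ELDiv A B] @ D2) C"
| eldivR: "derE (A # P) B \<Longrightarrow> derE P (ELDiv A B)"
| erdivL: "\<lbrakk>derE P A; derE (D1 @ [B] @ D2) C\<rbrakk> \<Longrightarrow> derE (D1 @ [ERDiv B A] @ P @ D2) C"
| erdivR: "derE (P @ [A]) B \<Longrightarrow> derE P (ERDiv B A)"
| eprodL: "derE (D1 @ [A, B] @ D2) C \<Longrightarrow> derE (D1 @ [EProd A B] @ D2) C"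
| eprodR: "\<lbrakk>derE D A; derE G B\<rbrakk> \<Longrightarrow> derE (D @ G) (EProd A B)"
| eoneL: "derE (D1 @ D2) C \<Longrightarrow> derE (D1 @ [EOne] @ D2) C"
| ebangR: "derE (map EBang As) B \<Longrightarrow> derE (map EBang As) (EBang B)"
| ebangL: "derE (D1 @ [A] @ D2) C \<Longrightarrow> derE (D1 @ [EBang A] @ D2) C"
| ebangP1: "derE (D1 @ [EBang A] @ P @ D2) C \<Longrightarrow> derE (D1 @ P @ [EBang A] @ D2) C"
| ebangP2: "derE (D1 @ P @ [EBang A] @ D2) C \<Longrightarrow> derE (D1 @ [EBang A] @ P @ D2) C"
| ebangC: "derE (D1 @ [EBang A, EBang A] @ D2) C \<Longrightarrow> derE (D1 @ [EBang A] @ D2) C"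
| ebangW: "derE (D1 @ D2) C \<Longrightarrow> derE (D1 @ [EBang A] @ D2) C"
| ecut: "\<lbrakk>derE P A; derE (D1 @ [A] @ D2) C\<rbrakk> \<Longrightarrow> derE (D1 @ P @ D2) C"

fun piq :: "nat \<Rightarrow> fm \<Rightarrow> efm" where
  "piq q (Var p) = (if p = q then EOne else EVar p)"
| "piq q One = EOne"
| "piq q (LDiv A B) = ELDiv (piq q A) (piq q B)"
| "piq q (RDiv A B) = ERDiv (piq q A) (piq q B)"
| "piq q (Prod A B) = EProd (piq q A) (piq q B)"
| "piq q (Diam A) = piq q A"
| "piq q (BInv A) = piq q A"
| "piq q (Bang A) = EBang (piq q A)"

fun piq_tt :: "nat \<Rightarrow> tt \<Rightarrow> efm list" where
  "piq_tt q (F A) = [piq q A]"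
| "piq_tt q (Br Xi) = concat (map (piq_tt q) Xi)"

definition piq_meta :: "nat \<Rightarrow> tt list \<Rightarrow> efm list" where
  "piq_meta q Xi = concat (map (piq_tt q) Xi)"

fun eprod :: "efm list \<Rightarrow> efm" where
  "eprod [] = EOne"
| "eprod [E] = E"
| "eprod (E # Es) = EProd E (eprod Es)"

fun mult_noq :: "nat \<Rightarrow> fm \<Rightarrow> bool" where
  "mult_noq q (Var p) = (p \<noteq> q)"
| "mult_noq q (LDiv A B) = (mult_noq q A \<and> mult_noq q B)"
| "mult_noq q (RDiv A B) = (mult_noq q A \<and> mult_noq q B)"
| "mult_noq q (Prod A B) = (mult_noq q A \<and> mult_noq q B)"
| "mult_noq q _ = False"

definition PhiF :: "nat \<Rightarrow> fm list \<Rightarrow> tt list" where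
  "PhiF s As = concat (map (\<lambda>A. [F (Bang (RDiv (RDiv (Var s) (Var s)) (Bang (BInv A)))),
                                   F (Bang (BInv A))]) As)"

end

theory Submission
  imports Defs
begin

lemma rdivL_H: "derF G B \<Longrightarrow> derF (D1 @ [F C] @ D2) D \<Longrightarrow> derF (D1 @ [F (RDiv C B)] @ G @ D2) D"
  using rdivL[of G B Hole D1 C D2 D] by simp

lemma bangL_H: "derF (D1 @ [F A] @ D2) C \<Longrightarrow> derF (D1 @ [F (Bang A)] @ D2) C"
  using bangL[of Hole D1 A D2 C] by simp

lemma bangP1_H: "derF (D1 @ [F (Bang A)] @ P @ D2) C \<Longrightarrow> derF (D1 @ P @ [F (Bang A)] @ D2) C"
  using bangP1[of Hole D1 A P D2 C] by simp

lemma bangP2_H: "derF (D1 @ P @ [F (Bang A)] @ D2) C \<Longrightarrow> derF (D1 @ [F (Bang A)] @ P @ D2) C"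
  using bangP2[of Hole D1 P A D2 C] by simp

lemma cut_H: "derF P A \<Longrightarrow> derF (G1 @ [F A] @ G2) C \<Longrightarrow> derF (G1 @ P @ G2) C"
  using cut[of P A Hole G1 G2 C] by simp

lemma part1: "derF (PhiF s As @ [F (Var s)]) (Var s)"
proof (induction As)
  case Nil
  then show ?case by (simp add: PhiF_def ax)
next
  case (Cons A As)
  have a: "derF ([F (RDiv (Var s) (Var s))] @ (PhiF s As @ [F (Var s)])) (Var s)"
    using rdivL_H[OF Cons.IH, of "[]" "Var s" "[]" "Var s"] ax by simp
  have b: "derF ([] @ [F (RDiv (RDiv (Var s) (Var s)) (Bang (BInv A)))] @ [F (Bang (BInv A))]
      @ (PhiF s As @ [F (Var s)])) (Var s)"
    using rdivL_H[OF ax[of "Bang (BInv A)"], of "[]" "RDiv (Var s) (Var s)" "PhiF s As @ [F (Var s)]" "Var s"] a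
    by simp
  have c: "derF ([] @ [F (Bang (RDiv (RDiv (Var s) (Var s)) (Bang (BInv A))))] @ ([F (Bang (BInv A))]
      @ PhiF s As @ [F (Var s)])) (Var s)"
    using bangL_H[OF b] by simp
  then show ?case by (simp add: PhiF_def)
qed

lemma phi_split: "A \<in> set As \<Longrightarrow> \<exists>P1 P2. PhiF s As = P1 @ [F (Bang (BInv A))] @ P2"
proof (induction As)
  case Nil then show ?case by simp
next
  case (Cons B As)
  show ?case
  proof (cases "A = B")
    case True
    then show ?thesis
      by (rule_tac x="[F (Bang (RDiv (RDiv (Var s) (Var s)) (Bang (BInv A))))]" in exI,
          rule_tac x="PhiF s As" in exI) (simp add: PhiF_def)
  next
    case False
    then obtain P1 P2 where "PhiF s As = P1 @ [F (Bang (BInv A))] @ P2" using Cons by auto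
    then show ?thesis
      by (rule_tac x="[F (Bang (RDiv (RDiv (Var s) (Var s)) (Bang (BInv B)))), F (Bang (BInv B))] @ P1" in exI,
          rule_tac x="P2" in exI) (simp add: PhiF_def)
  qed
qed

lemma brA: "derF [Br [F (Bang (BInv A))]] A"
proof -
  have "derF [Br [F (BInv A)]] A"
    using binvL[of Hole "[]" A "[]" A] ax by simp
  then show ?thesis
    using bangL[of "InBr [] Hole []" "[]" "BInv A" "[]" A] by simp
qed

lemma part2:
  assumes "A \<in> set As" "derF (PhiF s As @ D1 @ [F A] @ D2) C"
  shows "derF (PhiF s As @ D1 @ D2) C"
proof -
  obtain P1 P2 where P: "PhiF s As = P1 @ [F (Bang (BInv A))] @ P2" using phi_split assms(1) by blast
  let ?B = "BInv A"
  have 1: "derF ((PhiF s As @ D1) @ [Br [F (Bang ?B)]] @ D2) C"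
  proof -
    have "derF ((PhiF s As @ D1) @ [F A] @ D2) C" using assms(2) by simp
    from cut_H[OF brA this] show ?thesis .
  qed
  have 2: "derF ([] @ P1 @ [F (Bang ?B)] @ (P2 @ D1 @ [Br [F (Bang ?B)]] @ D2)) C"
    using 1 P by simp
  have 3: "derF ([] @ [F (Bang ?B)] @ P1 @ (P2 @ D1 @ [Br [F (Bang ?B)]] @ D2)) C"
    using bangP2_H[OF 2] .
  have 4: "derF (fill Hole (bangs [?B] @ (P1 @ P2 @ D1) @ [Br (bangs [?B] @ [])] @ D2)) C"
    using 3 by simp
  have 5: "derF (fill Hole (bangs [?B] @ (P1 @ P2 @ D1) @ [] @ D2)) C"
    using bangC[OF _ 4] by simp
  have 6: "derF ([] @ [F (Bang ?B)] @ P1 @ (P2 @ D1 @ D2)) C"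
    using 5 by simp
  have 7: "derF ([] @ P1 @ [F (Bang ?B)] @ (P2 @ D1 @ D2)) C"
    using bangP1_H[OF 6] .
  then show ?thesis using P by simp
qed

lemma emp_bang: "derE [] (EBang (ERDiv (ERDiv (EVar s) (EVar s)) (EBang a)))"
proof -
  have "derE ([] @ [EVar s]) (EVar s)" using eax by simp
  hence "derE [] (ERDiv (EVar s) (EVar s))" by (rule erdivR)
  hence "derE ([] @ []) (ERDiv (EVar s) (EVar s))" by simp
  hence "derE ([] @ [EBang a] @ []) (ERDiv (EVar s) (EVar s))" by (rule ebangW)
  hence "derE ([] @ [EBang a]) (ERDiv (EVar s) (EVar s))" by simp
  hence "derE [] (ERDiv (ERDiv (EVar s) (EVar s)) (EBang a))" by (rule erdivR)
  hence "derE (map EBang []) (EBang (ERDiv (ERDiv (EVar s) (EVar s)) (EBang a)))"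
    using ebangR[of "[]"] by simp
  then show ?thesis by simp
qed

lemma part3:
  assumes "s \<noteq> q"
  shows "derE (map (\<lambda>A. EBang (piq q A)) As) (eprod (piq_meta q (PhiF s As)))"
proof (induction As)
  case Nil
  then show ?case by (simp add: PhiF_def piq_meta_def eoneR)
next
  case (Cons A As)
  let ?a = "piq q A"
  let ?R = "piq_meta q (PhiF s As)"
  have pm: "piq_meta q (PhiF s (A # As)) = EBang (ERDiv (ERDiv (EVar s) (EVar s)) (EBang ?a)) # EBang ?a # ?R"
    using assms by (simp add: PhiF_def piq_meta_def)
  have t: "derE (EBang ?a # map (\<lambda>A. EBang (piq q A)) As) (eprod (EBang ?a # ?R))"
  proof (cases "?R = []")
    case True
    then have "As = []" by (cases As) (auto simp: PhiF_def piq_meta_def)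
    then show ?thesis using True eax by simp
  next
    case False
    then obtain r rs where "?R = r # rs" by (cases ?R) auto
    then have "eprod (EBang ?a # ?R) = EProd (EBang ?a) (eprod ?R)" by simp
    moreover have "derE ([EBang ?a] @ map (\<lambda>A. EBang (piq q A)) As) (EProd (EBang ?a) (eprod ?R))"
      using eprodR[OF eax Cons.IH] .
    ultimately show ?thesis by simp
  qed
  have "derE ([] @ (EBang ?a # map (\<lambda>A. EBang (piq q A)) As))
     (EProd (EBang (ERDiv (ERDiv (EVar s) (EVar s)) (EBang ?a))) (eprod (EBang ?a # ?R)))"
    using eprodR[OF emp_bang t] .
  then show ?case using pm by simp
qed

theorem proposition7:
  fixes s q :: nat and As :: "fm list"
  assumes "s \<noteq> q"
    and "\<forall>A \<in> set As. mult_noq q A"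
  shows "derF (PhiF s As @ [F (Var s)]) (Var s)
    \<and> (\<forall>i < length As. \<forall>D1 D2 C.
          derF (PhiF s As @ D1 @ [F (As ! i)] @ D2) C \<longrightarrow> derF (PhiF s As @ D1 @ D2) C)
    \<and> derE (map (\<lambda>A. EBang (piq q A)) As) (eprod (piq_meta q (PhiF s As)))"
  using part1 part2 part3[OF assms(1)] nth_mem by blast

end
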